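(* Let $M$ be a compact metric space and $f:M\to M$ a continuous map such that $[a_{f,\mathcal{U}}(n)]\in\mathbb{L}$ for every finite open covering $\mathcal{U}$ of $M$. Then $o(f)\in\overline{\mathbb{L}}$ and the topological entropy satisfies $h(f)=0$.
   Context: Let $\mathcal{O}$ be the set of non-decreasing sequences $a:\mathbb{N}\to[0,\infty)$, $a\approx b$ iff $c_1a(n)\le b(n)\le c_2a(n)$ for all $n$ for some constants $0<c_1\le c_2$, $\mathbb{O}=\mathcal{O}/\!\approx$ with classes $[a(n)]$, ordered by $[a(n)]\le[b(n)]$ iff $a(n)\le Cb(n)$ for all $n$ for some $C>0$; $\overline{\mathbb{O}}$ is its Dedekind–MacNeille completion. $\mathbb{L}$ is the set of classes $[a(n)]$ with $[a(mn)]=[a(n)]$ for some integer $m\ge2$, and $\overline{\mathbb{L}}=\{\sup(\Gamma)\in\overline{\mathbb{O}}:\Gamma\subset\mathbb{L}\text{ countable}\}$. For a finite open covering $\mathcal{U}=\{U_1,\dots,U_k\}$ of $M$, $\mathcal{U}^n=\{U_{i_0}\cap f^{-1}(U_{i_1})\cap\cdots\cap f^{-n}(U_{i_n})\neq\emptyset\}$ and $a_{f,\mathcal{U}}(n)$ is the minimal cardinality of a subcovering of $\mathcal{U}^n$. The generalized entropy is $o(f)=\sup\{[a_{f,\mathcal{U}}(n)]:\mathcal{U}\text{ finite open covering}\}\in\overline{\mathbb{O}}$ (equivalently the supremum over $\varepsilon>0$ of the classes of the minimal cardinalities of $(n,\varepsilon)$-generators). $h(f)$ denotes the classical topological entropy.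 *)

theory Defs
  imports "HOL-Analysis.Analysis" "HOL-Library.Extended_Real"
begin

definition OSeqs :: "(nat \<Rightarrow> real) set" where
  "OSeqs = {a. mono a \<and> (\<forall>n. 0 \<le> a n)}"

definition seq_equiv :: "(nat \<Rightarrow> real) \<Rightarrow> (nat \<Rightarrow> real) \<Rightarrow> bool" where
  "seq_equiv a b \<longleftrightarrow> (\<exists>c1 c2. 0 < c1 \<and> c1 \<le> c2 \<and> (\<forall>n. c1 * a n \<le> b n \<and> b n \<le> c2 * a n))"

definition seq_le :: "(nat \<Rightarrow> real) \<Rightarrow> (nat \<Rightarrow> real) \<Rightarrow> bool" where
  "seq_le a b \<longleftrightarrow> (\<exists>C>0. \<forall>n. a n \<le> C * b n)"

text \<open>Dedekind-MacNeille completion: an element of the completion is represented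
  by its cut, i.e. the set of (representatives of) classes below it.
  Upper and lower bounds inside O:\<close>
definition upper_bounds :: "(nat \<Rightarrow> real) set \<Rightarrow> (nat \<Rightarrow> real) set" where
  "upper_bounds S = {b \<in> OSeqs. \<forall>a\<in>S. seq_le a b}"

definition lower_bounds :: "(nat \<Rightarrow> real) set \<Rightarrow> (nat \<Rightarrow> real) set" where
  "lower_bounds T = {a \<in> OSeqs. \<forall>b\<in>T. seq_le a b}"

definition sup_cut :: "(nat \<Rightarrow> real) set \<Rightarrow> (nat \<Rightarrow> real) set" where
  "sup_cut S = lower_bounds (upper_bounds S)"

definition LSeqs :: "(nat \<Rightarrow> real) set" where
  "LSeqs = {a \<in> OSeqs. \<exists>m::nat. 2 \<le> m \<and> seq_equiv a (\<lambda>n. a (m * n))}"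

definition LBar :: "(nat \<Rightarrow> real) set set" where
  "LBar = {sup_cut \<Gamma> | \<Gamma>. countable \<Gamma> \<and> \<Gamma> \<subseteq> LSeqs}"

definition finite_open_cover :: "'a::metric_space set \<Rightarrow> 'a set set \<Rightarrow> bool" where
  "finite_open_cover M \<U> \<longleftrightarrow> finite \<U> \<and> (\<forall>U\<in>\<U>. openin (top_of_set M) U) \<and> \<Union>\<U> = M"

definition cover_iter :: "'a set \<Rightarrow> ('a \<Rightarrow> 'a) \<Rightarrow> 'a set set \<Rightarrow> nat \<Rightarrow> 'a set set" where
  "cover_iter M f \<U> n =
     {V. V \<noteq> {} \<and> (\<exists>s::nat \<Rightarrow> 'a set. (\<forall>j\<le>n. s j \<in> \<U>) \<and>
                        V = {x\<in>M. \<forall>j\<le>n. (f ^^ j) x \<in> s j})}"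

definition cover_growth :: "'a set \<Rightarrow> ('a \<Rightarrow> 'a) \<Rightarrow> 'a set set \<Rightarrow> nat \<Rightarrow> real" where
  "cover_growth M f \<U> n =
     real (Inf {card \<V> | \<V>. \<V> \<subseteq> cover_iter M f \<U> n \<and> finite \<V> \<and> \<Union>\<V> = M})"

definition gen_entropy :: "'a::metric_space set \<Rightarrow> ('a \<Rightarrow> 'a) \<Rightarrow> (nat \<Rightarrow> real) set" where
  "gen_entropy M f = sup_cut {cover_growth M f \<U> | \<U>. finite_open_cover M \<U>}"

text \<open>Classical topological entropy (Adler-Konheim-McAndrew):
  h(f) = sup over finite open covers U of lim (1/(n+1)) log a_{f,U}(n)
  (the limit exists by subadditivity; we use limsup).\<close>
definition top_entropy :: "'a::metric_space set \<Rightarrow> ('a \<Rightarrow> 'a) \<Rightarrow> ereal" where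
  "top_entropy M f =
     (SUP \<U>\<in>{\<U>. finite_open_cover M \<U>}.
        limsup (\<lambda>n. ereal (ln (cover_growth M f \<U> n) / real (Suc n))))"

end

theory Submission
  imports Defs "HOL-Real_Asymp.Real_Asymp"
begin

lemma funpow_in:
  assumes "f ` M \<subseteq> M" "x \<in> M" shows "(f ^^ j) x \<in> M"
  using assms by (induction j) auto

lemma cover_iter_finite:
  assumes "finite \<U>" shows "finite (cover_iter M f \<U> n)"
proof -
  have "cover_iter M f \<U> n \<subseteq> (\<lambda>s. {x\<in>M. \<forall>j\<le>n. (f ^^ j) x \<in> s j}) ` (PiE {..n} (\<lambda>_. \<U>))"
  proof
    fix V assume "V \<in> cover_iter M f \<U> n"
    then obtain s where s: "\<forall>j\<le>n. s j \<in> \<U>" "V = {x\<in>M. \<forall>j\<le>n. (f ^^ j) x \<in> s j}"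
      unfolding cover_iter_def by blast
    have "restrict s {..n} \<in> PiE {..n} (\<lambda>_. \<U>)" using s(1) by auto
    moreover have "V = {x\<in>M. \<forall>j\<le>n. (f ^^ j) x \<in> restrict s {..n} j}" using s(2) by auto
    ultimately show "V \<in> (\<lambda>s. {x\<in>M. \<forall>j\<le>n. (f ^^ j) x \<in> s j}) ` (PiE {..n} (\<lambda>_. \<U>))" by blast
  qed
  moreover have "finite (PiE {..n} (\<lambda>_. \<U>))" using assms by (intro finite_PiE) auto
  ultimately show ?thesis using finite_surj by blast
qed

lemma cover_iter_covers:
  assumes "\<Union>\<U> = M" "f ` M \<subseteq> M" shows "\<Union>(cover_iter M f \<U> n) = M"
proof
  show "\<Union>(cover_iter M f \<U> n) \<subseteq> M" unfolding cover_iter_def by auto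
  show "M \<subseteq> \<Union>(cover_iter M f \<U> n)"
  proof
    fix x assume x: "x \<in> M"
    define s where "s j = (SOME U. U \<in> \<U> \<and> (f ^^ j) x \<in> U)" for j
    have "s j \<in> \<U> \<and> (f ^^ j) x \<in> s j" for j
    proof -
      have "(f ^^ j) x \<in> M" using funpow_in[OF assms(2) x] .
      then have "\<exists>U. U \<in> \<U> \<and> (f ^^ j) x \<in> U" using assms(1) by auto
      then show ?thesis unfolding s_def by (rule someI_ex)
    qed
    then have hx: "x \<in> {y\<in>M. \<forall>j\<le>n. (f ^^ j) y \<in> s j}" using x by auto
    have "{y\<in>M. \<forall>j\<le>n. (f ^^ j) y \<in> s j} \<in> cover_iter M f \<U> n"
      unfolding cover_iter_def mem_Collect_eq
    proof (intro conjI exI)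
      show "{y\<in>M. \<forall>j\<le>n. (f ^^ j) y \<in> s j} \<noteq> {}" using hx by blast
      show "\<forall>j\<le>n. s j \<in> \<U>" using \<open>\<And>j. s j \<in> \<U> \<and> _\<close> by blast
    qed (rule refl)
    with hx show "x \<in> \<Union>(cover_iter M f \<U> n)" by blast
  qed
qed

lemma refine_le:
  assumes "finite \<V>" "\<Union>\<V> = M" "f ` M \<subseteq> M" and ref: "\<forall>V\<in>\<V>. \<exists>U\<in>\<U>. V \<subseteq> U"
  shows "cover_growth M f \<U> n \<le> cover_growth M f \<V> n"
proof -
  define KV where "KV = {card \<W> | \<W>. \<W> \<subseteq> cover_iter M f \<V> n \<and> finite \<W> \<and> \<Union>\<W> = M}"
  define KU where "KU = {card \<W> | \<W>. \<W> \<subseteq> cover_iter M f \<U> n \<and> finite \<W> \<and> \<Union>\<W> = M}"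
  have "card (cover_iter M f \<V> n) \<in> KV" unfolding KV_def
    using cover_iter_finite[OF assms(1)] cover_iter_covers[OF assms(2,3)] by blast
  then have "Inf KV \<in> KV" by (rule wellorder_InfI)
  then obtain W0 where W0: "W0 \<subseteq> cover_iter M f \<V> n" "finite W0" "\<Union>W0 = M" "Inf KV = card W0"
    unfolding KV_def by blast
  have ex: "\<exists>W'. W' \<in> cover_iter M f \<U> n \<and> W \<subseteq> W'" if "W \<in> cover_iter M f \<V> n" for W
  proof -
    have "W \<noteq> {} \<and> (\<exists>s. (\<forall>j\<le>n. s j \<in> \<V>) \<and> W = {x\<in>M. \<forall>j\<le>n. (f ^^ j) x \<in> s j})"
      using that unfolding cover_iter_def by simp
    then obtain s where s: "W \<noteq> {}" "\<forall>j\<le>n. s j \<in> \<V>" "W = {x\<in>M. \<forall>j\<le>n. (f ^^ j) x \<in> s j}"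
      by blast
    define t where "t j = (SOME U. U \<in> \<U> \<and> s j \<subseteq> U)" for j
    have t: "t j \<in> \<U> \<and> s j \<subseteq> t j" if "j \<le> n" for j
      unfolding t_def by (rule someI_ex) (use ref s(2) that in blast)
    define W' where "W' = {x\<in>M. \<forall>j\<le>n. (f ^^ j) x \<in> t j}"
    have "W \<subseteq> W'" using t s(3) unfolding W'_def by blast
    then have "W' \<in> cover_iter M f \<U> n" unfolding cover_iter_def W'_def using t s(1) by blast
    with \<open>W \<subseteq> W'\<close> show ?thesis by blast
  qed
  define g where "g W = (SOME W'. W' \<in> cover_iter M f \<U> n \<and> W \<subseteq> W')" for W
  have g: "g W \<in> cover_iter M f \<U> n \<and> W \<subseteq> g W" if "W \<in> W0" for W
    unfolding g_def by (rule someI_ex) (use ex W0(1) that in blast)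
  have "\<Union>(g ` W0) = M"
  proof
    show "\<Union>(g ` W0) \<subseteq> M" using g unfolding cover_iter_def by blast
    show "M \<subseteq> \<Union>(g ` W0)" using g W0(3) by blast
  qed
  then have "card (g ` W0) \<in> KU" unfolding KU_def using g W0(2) by blast
  then have "Inf KU \<le> card (g ` W0)" by (rule wellorder_Inf_le1)
  also have "\<dots> \<le> card W0" using W0(2) by (rule card_image_le)
  finally have "Inf KU \<le> Inf KV" using W0(4) by simp
  then show ?thesis unfolding cover_growth_def KU_def KV_def by simp
qed

lemma diam_ball:
  fixes S :: "'a::metric_space set"
  assumes "S \<subseteq> ball x r" "0 < r" shows "diameter S \<le> 2 * r"
proof (cases "S = {}")
  case True then show ?thesis using assms by (auto)
next
  case False
  then obtain y where "y \<in> S" by blast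
  then have "0 < r" using assms by auto
  have "dist a b \<le> 2 * r" if "a \<in> S" "b \<in> S" for a b
  proof -
    have "dist a b \<le> dist a x + dist x b" by (rule dist_triangle)
    also have "\<dots> < 2 * r"
    proof -
      have "dist x a < r" "dist x b < r" using assms that by auto
      then show ?thesis by (simp add: dist_commute)
    qed
    finally show ?thesis by simp
  qed
  then show ?thesis using False unfolding diameter_def
    by (auto intro!: cSUP_least)
qed

lemma L_poly_bound:
  assumes "a \<in> LSeqs"
  obtains K p where "K \<ge> 1" "p \<ge> 0" "\<And>n. n \<ge> 1 \<Longrightarrow> a n \<le> K * real n powr p"
proof -
  from assms obtain m :: nat where m: "2 \<le> m" "seq_equiv a (\<lambda>n. a (m * n))" and
    mono: "mono a" and nn: "\<And>n. 0 \<le> a n"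
    unfolding LSeqs_def OSeqs_def by blast
  from m(2) obtain c2 where c2: "\<And>n. a (m * n) \<le> c2 * a n"
    unfolding seq_equiv_def by blast
  define D where "D = max 1 c2"
  have D1: "D \<ge> 1" unfolding D_def by simp
  have aD: "a (m * n) \<le> D * a n" for n
  proof -
    have "c2 * a n \<le> D * a n" using nn[of n] unfolding D_def by (intro mult_right_mono) auto
    then show ?thesis using c2[of n] by linarith
  qed
  have pow: "a (m ^ k) \<le> D ^ k * a 1" for k
  proof (induction k)
    case 0 then show ?case by simp
  next
    case (Suc k)
    have "a (m ^ Suc k) = a (m * m ^ k)" by simp
    also have "\<dots> \<le> D * a (m ^ k)" by (rule aD)
    also have "\<dots> \<le> D * (D ^ k * a 1)" using Suc D1 by (intro mult_left_mono) auto
    finally show ?case by simp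
  qed
  define p where "p = ln D / ln m"
  have lnm: "ln (real m) > 0" using m(1) by simp
  have p0: "p \<ge> 0" unfolding p_def using D1 lnm by simp
  define K where "K = max 1 (D * a 1)"
  have "a n \<le> K * real n powr p" if n1: "n \<ge> 1" for n
  proof -
    have ex: "\<exists>k. n \<le> m ^ k"
    proof
      have "n < 2 ^ n" by (rule less_exp)
      also have "(2::nat) ^ n \<le> m ^ n" using m(1) by (rule power_mono) simp
      finally show "n \<le> m ^ n" by simp
    qed
    define k where "k = (LEAST k. n \<le> m ^ k)"
    have k: "n \<le> m ^ k" unfolding k_def using ex by (rule LeastI_ex)
    have "a n \<le> a (m ^ k)" using mono k by (simp add: monoD)
    also have "\<dots> \<le> D ^ k * a 1" by (rule pow)
    also have "D ^ k \<le> D * real n powr p"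
    proof (cases k)
      case 0
      have "1 \<le> real n powr p" using n1 p0 by (simp add: ge_one_powr_ge_zero)
      then show ?thesis using 0 D1 by (simp add: order_trans[OF _ mult_mono[of 1 D 1]])
    next
      case (Suc j)
      have "j < k" using Suc by simp
      then have "\<not> n \<le> m ^ j" unfolding k_def by (rule not_less_Least)
      then have lt: "real (m ^ j) \<le> real n" by simp
      have "D ^ j = real (m ^ j) powr p"
      proof -
        have "real (m ^ j) powr p = exp (p * ln (real (m ^ j)))"
          using m(1) by (simp add: powr_def)
        also have "\<dots> = exp (real j * ln D)"
          using lnm by (simp add: ln_realpow p_def)
        also have "\<dots> = D ^ j" using D1 by (simp add: exp_of_nat_mult[symmetric] ln_realpow[symmetric] del: of_nat_power)
        finally show ?thesis by simp
      qed
      also have "\<dots> \<le> real n powr p" using lt p0 by (intro powr_mono2) auto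
      finally show ?thesis using Suc D1 by simp
    qed
    then have "D ^ k * a 1 \<le> D * real n powr p * a 1" using nn[of 1] by (rule mult_right_mono)
    also have "\<dots> = (D * a 1) * real n powr p" by simp
    also have "\<dots> \<le> K * real n powr p" unfolding K_def by (intro mult_right_mono) auto
    finally show ?thesis .
  qed
  then show ?thesis using that[of K p] p0 unfolding K_def by auto
qed


lemma limsup_zero:
  assumes "cover_growth M f \<U> \<in> LSeqs"
  shows "limsup (\<lambda>n. ereal (ln (cover_growth M f \<U> n) / real (Suc n))) = 0"
proof -
  let ?a = "cover_growth M f \<U>"
  obtain K p where K: "K \<ge> 1" "p \<ge> 0" "\<And>n. n \<ge> 1 \<Longrightarrow> ?a n \<le> K * real n powr p"
    using L_poly_bound[OF assms] by blast
  have lo: "0 \<le> ln (?a n) / real (Suc n)" for n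
  proof -
    obtain N :: nat where "?a n = real N" unfolding cover_growth_def by blast
    then have "0 \<le> ln (?a n)" by (cases N) auto
    then show ?thesis by simp
  qed
  have hi: "ln (?a n) / real (Suc n) \<le> (ln K + p * ln (real n)) / (real n + 1)" if "n \<ge> 1" for n
  proof -
    have lnK: "ln K \<ge> 0" using K(1) by simp
    have lnn: "ln (real n) \<ge> 0" using that by simp
    have "ln (?a n) \<le> ln K + p * ln (real n)"
    proof (cases "?a n > 0")
      case True
      have "ln (?a n) \<le> ln (K * real n powr p)"
        using True K(3)[OF that] by (subst ln_le_cancel_iff) (use K(1) that in auto)
      also have "\<dots> = ln K + p * ln (real n)" using K(1) that by (simp add: ln_mult ln_powr)
      finally show ?thesis .
    next
      case False
      have "?a n \<ge> 0" unfolding cover_growth_def by simp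
      then have "?a n = 0" using False by simp
      then have "ln (?a n) = 0" by simp
      then show ?thesis using lnK lnn K(2) by simp
    qed
    then show ?thesis by (simp add: divide_right_mono add.commute)
  qed
  have t1: "(\<lambda>n::nat. ln (real n) / (real n + 1)) \<longlonglongrightarrow> 0" by real_asymp
  have t2: "(\<lambda>n::nat. ln K / (real n + 1)) \<longlonglongrightarrow> 0" by real_asymp
  have "(\<lambda>n. ln K / (real n + 1) + p * (ln (real n) / (real n + 1))) \<longlonglongrightarrow> 0 + p * 0"
    by (intro tendsto_intros t1 t2)
  then have th: "(\<lambda>n. (ln K + p * ln (real n)) / (real n + 1)) \<longlonglongrightarrow> 0"
    by (simp add: add_divide_distrib)
  have L: "(\<lambda>n. ln (?a n) / real (Suc n)) \<longlonglongrightarrow> 0"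
  proof (rule tendsto_sandwich[OF _ _ tendsto_const th])
    show "\<forall>\<^sub>F n in sequentially. 0 \<le> ln (?a n) / real (Suc n)" using lo by simp
    show "\<forall>\<^sub>F n in sequentially. ln (?a n) / real (Suc n) \<le> (ln K + p * ln (real n)) / (real n + 1)"
      using eventually_ge_at_top[of "1::nat"] by (rule eventually_mono) (rule hi)
  qed
  have "(\<lambda>n. ereal (ln (?a n) / real (Suc n))) \<longlonglongrightarrow> ereal 0"
    using L by (rule tendsto_ereal)
  then have "limsup (\<lambda>n. ereal (ln (?a n) / real (Suc n))) = ereal 0"
    by (rule lim_imp_Limsup[OF trivial_limit_sequentially])
  then show ?thesis by (simp add: zero_ereal_def)
qed

theorem mainTheorem5:
  fixes M :: "'a::metric_space set" and f :: "'a \<Rightarrow> 'a"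
  assumes "compact M"
    and "continuous_on M f"
    and "f ` M \<subseteq> M"
    and "\<And>\<U>. finite_open_cover M \<U> \<Longrightarrow> cover_growth M f \<U> \<in> LSeqs"
  shows "gen_entropy M f \<in> LBar \<and> top_entropy M f = 0"
proof
  have Mc: "finite_open_cover M {M}" unfolding finite_open_cover_def by auto
  show "top_entropy M f = 0"
    unfolding top_entropy_def
  proof -
    have ne: "{U. finite_open_cover M U} \<noteq> {}" using Mc by blast
    have "(SUP U\<in>{U. finite_open_cover M U}. limsup (\<lambda>n. ereal (ln (cover_growth M f U n) / real (Suc n))))
        = (SUP U\<in>{U. finite_open_cover M U}. (0::ereal))"
      using limsup_zero[OF assms(4)] by (intro SUP_cong refl) auto
    also have "\<dots> = 0" using ne by simp
    finally show "(SUP U\<in>{U. finite_open_cover M U}. limsup (\<lambda>n. ereal (ln (cover_growth M f U n) / real (Suc n)))) = 0" .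
  qed
  define r where "r k = 1 / real (Suc k)" for k
  have rpos: "r k > 0" for k unfolding r_def by simp
  have "\<exists>C. finite C \<and> C \<subseteq> M \<and> M \<subseteq> (\<Union>x\<in>C. ball x (r k))" for k
  proof -
    have "M \<subseteq> (\<Union>x\<in>M. ball x (r k))" using rpos by auto
    from compactE_image[OF assms(1) _ this] obtain C where "C \<subseteq> M" "finite C" "M \<subseteq> (\<Union>x\<in>C. ball x (r k))"
      by blast
    then show ?thesis by blast
  qed
  then obtain Cs where Cs: "\<And>k. finite (Cs k) \<and> Cs k \<subseteq> M \<and> M \<subseteq> (\<Union>x\<in>Cs k. ball x (r k))"
    by metis
  define V where "V k = (\<lambda>x. M \<inter> ball x (r k)) ` Cs k" for k
  have Vc: "finite_open_cover M (V k)" for k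
    unfolding finite_open_cover_def V_def using Cs[of k]
    by (auto simp: openin_open_Int)
  define \<Gamma> where "\<Gamma> = range (\<lambda>k. cover_growth M f (V k))"
  define S where "S = {cover_growth M f \<U> | \<U>. finite_open_cover M \<U>}"
  have GS: "\<Gamma> \<subseteq> S" unfolding \<Gamma>_def S_def using Vc by blast
  have dom: "\<exists>k. \<forall>n. cover_growth M f \<U> n \<le> cover_growth M f (V k) n" if U: "finite_open_cover M \<U>" for \<U>
  proof (cases "M = {}")
    case True
    then have "V 0 = {}" unfolding V_def using Cs[of 0] by auto
    then have "\<forall>n. cover_growth M f \<U> n \<le> cover_growth M f (V 0) n"
      using refine_le[of "V 0" M f \<U>] Vc[of 0] assms(3)
      unfolding finite_open_cover_def by auto
    then show ?thesis by blast
  next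
    case False
    define B where "B U = (SOME T. open T \<and> U = M \<inter> T)" for U
    have B: "open (B U) \<and> U = M \<inter> B U" if "U \<in> \<U>" for U
      unfolding B_def by (rule someI_ex) (use U that in \<open>auto simp: finite_open_cover_def openin_open\<close>)
    have "\<U> \<noteq> {}" using False U unfolding finite_open_cover_def by auto
    have cov: "M \<subseteq> \<Union>(B ` \<U>)" using B U unfolding finite_open_cover_def by blast
    have ne2: "B ` \<U> \<noteq> {}" using \<open>\<U> \<noteq> {}\<close> by blast
    have opn: "\<And>X. X \<in> B ` \<U> \<Longrightarrow> open X" using B by blast
    obtain \<delta> where d: "0 < \<delta>" "\<And>T. \<lbrakk>T \<subseteq> M; diameter T < \<delta>\<rbrakk> \<Longrightarrow> \<exists>B' \<in> B ` \<U>. T \<subseteq> B'"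
      using Lebesgue_number_lemma[OF assms(1) ne2 cov opn] by blast
    obtain k :: nat where k: "2 / \<delta> < real k" using reals_Archimedean2 by blast
    have "2 * r k < \<delta>"
    proof -
      have "2 < \<delta> * real k" using k d(1) by (simp add: field_simps)
      also have "\<dots> < \<delta> * real (Suc k)" using d(1) by simp
      finally show ?thesis unfolding r_def using d(1) by (simp add: field_simps)
    qed
    have "\<forall>W\<in>V k. \<exists>U\<in>\<U>. W \<subseteq> U"
    proof
      fix W assume "W \<in> V k"
      then obtain x where W: "W = M \<inter> ball x (r k)" unfolding V_def by blast
      have "diameter W \<le> 2 * r k" using W rpos by (intro diam_ball) auto
      then obtain U where "U \<in> \<U>" "W \<subseteq> B U" using d(2)[of W] W \<open>2 * r k < \<delta>\<close> by force
      then have "W \<subseteq> U" using B[of U] W by blast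
      then show "\<exists>U\<in>\<U>. W \<subseteq> U" using \<open>U \<in> \<U>\<close> by blast
    qed
    then show ?thesis using refine_le[of "V k" M f \<U>] Vc[of k] assms(3)
      unfolding finite_open_cover_def by auto
  qed
  have "upper_bounds S = upper_bounds \<Gamma>"
  proof
    show "upper_bounds S \<subseteq> upper_bounds \<Gamma>" using GS unfolding upper_bounds_def by blast
    show "upper_bounds \<Gamma> \<subseteq> upper_bounds S"
    proof
      fix b assume b: "b \<in> upper_bounds \<Gamma>"
      have "seq_le a b" if "a \<in> S" for a
      proof -
        obtain \<U> where U: "finite_open_cover M \<U>" "a = cover_growth M f \<U>" using \<open>a \<in> S\<close> unfolding S_def by blast
        obtain k where k: "\<forall>n. a n \<le> cover_growth M f (V k) n" using dom[OF U(1)] U(2) by blast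
        have "seq_le (cover_growth M f (V k)) b" using b unfolding upper_bounds_def \<Gamma>_def by blast
        then obtain C where "C > 0" "\<forall>n. cover_growth M f (V k) n \<le> C * b n" unfolding seq_le_def by blast
        then show ?thesis unfolding seq_le_def using k by (meson order_trans)
      qed
      then show "b \<in> upper_bounds S" using b unfolding upper_bounds_def by blast
    qed
  qed
  then have "gen_entropy M f = sup_cut \<Gamma>" unfolding gen_entropy_def sup_cut_def S_def by simp
  moreover have "countable \<Gamma>" unfolding \<Gamma>_def by simp
  moreover have "\<Gamma> \<subseteq> LSeqs" unfolding \<Gamma>_def using assms(4) Vc by blast
  ultimately show "gen_entropy M f \<in> LBar" unfolding LBar_def by blast
qed

end
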